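(* Let $m\ge2$ and let $A(\mathbf z)$, $\mathbf z=(z_1,\dots,z_m)$, be the $(2m+1)\times(2m+1)$ matrix whose rows and columns are indexed, in this order, by $s_0,s_1,\dots,s_m,s_1^{-1},\dots,s_m^{-1}$, with entries: column $s_0$ is zero; row $s_0$ has entry $z_j$ in columns $s_j$ and $s_j^{-1}$ ($1\le j\le m$); row $s_i$ ($1\le i\le m$) has entry $z_j$ in column $s_j$ for all $j$, entry $z_j$ in column $s_j^{-1}$ for $j\ne i$, and $0$ in column $s_i^{-1}$; row $s_i^{-1}$ has entry $z_j$ in column $s_j^{-1}$ for all $j$, entry $z_j$ in column $s_j$ for $j\ne i$, and $0$ in column $s_i$. For $1\le i\le 2m+1$ let $(I-A(\mathbf z):i,1)$ denote the matrix obtained from $I-A(\mathbf z)$ by deleting its $i$-th row and first column. Then $$\sum_{i=1}^{2m+1}(-1)^{i+1}\det\big(I-A(\mathbf z):i,1\big)=(1-z_1^2)\cdots(1-z_m^2).$$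
   Context: $I$ is the $(2m+1)\times(2m+1)$ identity matrix; the identity is between polynomials in $z_1,\dots,z_m$. *)

theory Defs
  imports "Jordan_Normal_Form.Determinant"
begin

text \<open>Index convention (0-based): row/column 0 is s_0, k in 1..m is s_k,
  k in m+1..2m is s_(k-m)^(-1). The variables are z 1, ..., z m.\<close>

definition matA :: "nat \<Rightarrow> (nat \<Rightarrow> 'a::comm_ring_1) \<Rightarrow> 'a mat" where
  "matA m z = mat (2*m+1) (2*m+1) (\<lambda>(r,c).
     if c = 0 then 0
     else if r = 0 then (if c \<le> m then z c else z (c - m))
     else if r \<le> m then
       (if c \<le> m then z c else (if c - m = r then 0 else z (c - m)))
     else
       (if c > m then z (c - m) else (if c = r - m then 0 else z c)))"

end

theory Submission
  imports Defs
begin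

theorem lemma2:
  fixes m :: nat and z :: "nat \<Rightarrow> 'a::comm_ring_1"
  assumes "m \<ge> 2"
  shows "(\<Sum>i=1..2*m+1. (-1)^(i+1) *
            det (mat_delete (1\<^sub>m (2*m+1) - matA m z) (i-1) 0))
         = (\<Prod>j=1..m. 1 - (z j)^2)"
proof -
  define n where "n = 2*m+1"
  define M where "M = 1\<^sub>m n - matA m z"
  define B where "B = mat n n (\<lambda>(i,j). if j = 0 then 1 else M $$ (i,j))"
  define L where "L = mat n n (\<lambda>(i,k). if k = 0 \<or> k = i then 1 else if m < i \<and> k = i - m then z k else (0::'a))"
  define U where "U = mat n n (\<lambda>(k,j). if k = 0 then (if j = 0 then 1 else - z (if j \<le> m then j else j - m))
    else if k \<le> m then (if j = k then 1 else if j = k + m then z k else 0)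
    else (if j = k then 1 - z (k-m)^2 else (0::'a)))"
  have Bc: "B \<in> carrier_mat n n" and Lc: "L \<in> carrier_mat n n" and Uc: "U \<in> carrier_mat n n"
    unfolding B_def L_def U_def by auto
  have Ac: "dim_row (matA m z) = n" "dim_col (matA m z) = n" unfolding matA_def n_def by auto
  have del: "mat_delete B i 0 = mat_delete M i 0" if "i < n" for i
    using that Ac unfolding B_def M_def mat_delete_def by (intro eq_matI) auto
  have "det B = (\<Sum>i<n. B $$ (i,0) * cofactor B i 0)"
    by (rule laplace_expansion_column[OF Bc]) (simp add: n_def)
  also have "\<dots> = (\<Sum>i<n. (-1)^i * det (mat_delete M i 0))"
    by (rule sum.cong) (auto simp: cofactor_def del, simp add: B_def)
  also have "\<dots> = (\<Sum>i=1..2*m+1. (-1)^(i+1) * det (mat_delete (1\<^sub>m (2*m+1) - matA m z) (i-1) 0))"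
  proof -
    have "(\<Sum>i=1..2*m+1. (-1)^(i+1) * det (mat_delete (1\<^sub>m (2*m+1) - matA m z) (i-1) 0))
       = (\<Sum>i=0..2*m. (-1)^(i+2) * det (mat_delete M i 0))"
    proof -
      have e: "{1..2*m+1} = {Suc 0..Suc(2*m)}" by simp
      show ?thesis unfolding e sum.shift_bounds_cl_Suc_ivl by (simp add: ac_simps M_def n_def)
    qed
    also have "\<dots> = (\<Sum>i<n. (-1)^i * det (mat_delete M i 0))"
      unfolding n_def by (rule sum.cong) auto
    finally show ?thesis by simp
  qed
  finally have 1: "det B = (\<Sum>i=1..2*m+1. (-1)^(i+1) * det (mat_delete (1\<^sub>m (2*m+1) - matA m z) (i-1) 0))" .
  have LU: "B = L * U"
  proof (rule eq_matI)
    fix i j assume i: "i < dim_row (L * U)" and j: "j < dim_col (L * U)"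
    hence i: "i < n" and j: "j < n" using Lc Uc by auto
    have Lexp: "L $$ (i,k) = (if k = 0 then 1 else 0) + (if k = i \<and> i \<noteq> 0 then 1 else 0) + (if m < i \<and> k = i - m then z (i-m) else 0)" if "k < n" for k
      using i that assms unfolding L_def by auto
    have "(L * U) $$ (i,j) = (\<Sum>k\<in>{0..<n}. L $$ (i,k) * U $$ (k,j))"
      using i j Lc Uc by (auto simp: scalar_prod_def)
    also have "\<dots> = (\<Sum>k\<in>{0..<n}. (if k = 0 then U $$ (k,j) else 0) + (if k = i then (if i \<noteq> 0 then U $$ (k,j) else 0) else 0)
        + (if k = i - m then (if m < i then z (i-m) * U $$ (k,j) else 0) else 0))"
      by (rule sum.cong) (auto simp: Lexp distrib_right)
    also have "\<dots> = U $$ (0,j) + (if i \<noteq> 0 then U $$ (i,j) else 0) + (if m < i then z (i-m) * U $$ (i-m,j) else 0)"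
      using i unfolding sum.distrib sum.delta[OF finite_atLeastLessThan] by (auto simp: n_def)
    also have "\<dots> = B $$ (i,j)"
      using i j assms unfolding U_def B_def M_def matA_def n_def
      by (auto simp: algebra_simps power2_eq_square)
    finally show "B $$ (i,j) = (L * U) $$ (i,j)" by simp
  qed (use Lc Uc Bc in auto)
  have dL: "det L = 1"
  proof -
    have "det L = prod_list (diag_mat L)"
      by (rule det_lower_triangular[OF _ Lc]) (auto simp: L_def)
    also have "\<dots> = 1" unfolding prod_list_diag_prod using Lc by (simp add: L_def)
    finally show ?thesis .
  qed
  have dU: "det U = (\<Prod>j=1..m. 1 - (z j)^2)"
  proof -
    have "det U = prod_list (diag_mat U)"
      by (rule det_upper_triangular[OF _ Uc]) (auto simp: U_def upper_triangular_def)
    also have "\<dots> = (\<Prod>i\<in>{0..<n}. if m < i then 1 - z (i-m)^2 else 1)"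
      unfolding prod_list_diag_prod using Uc by (intro prod.cong) (auto simp: U_def)
    also have "\<dots> = (\<Prod>i\<in>{1+m..m+m}. 1 - z (i-m)^2)"
      by (rule prod.mono_neutral_cong_right) (auto simp: n_def)
    also have "\<dots> = (\<Prod>j=1..m. 1 - (z j)^2)"
      by (subst prod.shift_bounds_cl_nat_ivl) simp
    finally show ?thesis .
  qed
  have "det B = (\<Prod>j=1..m. 1 - (z j)^2)"
    unfolding LU det_mult[OF Lc Uc] dL dU by simp
  with 1 show ?thesis by simp
qed
end
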